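(* Let $(Z, S(1), S(0), Y(1), Y(0), \mathbf{X})$ be random variables with $Z\in\{0,1\}$, $S(z)\in\{0,1\}$, $Y(z)$ real-valued, $\mathbf{X}$ a covariate vector, observed $S=S(Z)$, $Y=Y(Z)$, and assume Randomization: $Z \perp\!\!\!\perp \{S(1),S(0),Y(1),Y(0),\mathbf{X}\}$. Assume Strong Monotonicity, i.e. $S(0)=0$ almost surely. Suppose there is a constant $\varepsilon$ (not depending on $\mathbf{X}$) such that $$\varepsilon = \frac{E\{Y(0)\mid U=s\bar{s},\mathbf{X}\}}{E\{Y(0)\mid U=\bar{s}\bar{s},\mathbf{X}\}}.$$ Then $$ACE_{s\bar{s}} = E(Y\mid Z=1,S=1) - E\{w^{\varepsilon}_{s\bar{s}}(\mathbf{X})Y\mid Z=0\},\qquad ACE_{\bar{s}\bar{s}} = E(Y\mid Z=1,S=0) - E\{w^{\varepsilon}_{\bar{s}\bar{s}}(\mathbf{X})Y\mid Z=0\},$$ where $w^{\varepsilon}_{s\bar{s}}(\mathbf{X}) = \frac{\varepsilon e_{s\bar{s}}(\mathbf{X})}{\{\varepsilon e_{s\bar{s}}(\mathbf{X}) + e_{\bar{s}\bar{s}}(\mathbf{X})\}\pi_{s\bar{s}}}$ and $w^{\varepsilon}_{\bar{s}\bar{s}}(\mathbf{X}) = \frac{e_{\bar{s}\bar{s}}(\mathbf{X})}{\{\varepsilon e_{s\bar{s}}(\mathbf{X}) + e_{\bar{s}\bar{s}}(\mathbf{X})\}\pi_{\bar{s}\bar{s}}}$.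
   Context: The principal stratum is $U=(S(1),S(0))$, whose values $(1,1),(1,0),(0,1),(0,0)$ are labelled $ss, s\bar{s}, \bar{s}s, \bar{s}\bar{s}$. Principal scores: $e_u(\mathbf{X}) = \Pr(U=u\mid \mathbf{X})$; proportions $\pi_u=\Pr(U=u)$. Principal causal effects: $ACE_u = E\{Y(1)-Y(0)\mid U=u\}$. All expectations are assumed to exist and all conditioning events and denominators to be positive. *)

theory Defs
  imports "HOL-Probability.Probability"
begin

text \<open>Principal strata are encoded as pairs (S(1), S(0)) of booleans:
  (True,True) = ss, (True,False) = s-sbar, (False,True) = sbar-s, (False,False) = sbar-sbar.\<close>

definition stratum :: "('a \<Rightarrow> bool) \<Rightarrow> ('a \<Rightarrow> bool) \<Rightarrow> 'a \<Rightarrow> bool \<times> bool" where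
  "stratum S1 S0 = (\<lambda>\<omega>. (S1 \<omega>, S0 \<omega>))"

definition obs :: "('a \<Rightarrow> bool) \<Rightarrow> ('a \<Rightarrow> 'b) \<Rightarrow> ('a \<Rightarrow> 'b) \<Rightarrow> 'a \<Rightarrow> 'b" where
  "obs Z V1 V0 = (\<lambda>\<omega>. if Z \<omega> then V1 \<omega> else V0 \<omega>)"

definition cond_mean_ev :: "'a measure \<Rightarrow> ('a \<Rightarrow> real) \<Rightarrow> 'a set \<Rightarrow> real" where
  "cond_mean_ev M f B = (\<integral>\<omega>. indicator B \<omega> * f \<omega> \<partial>M) / measure M B"

definition sigX :: "'a measure \<Rightarrow> ('a \<Rightarrow> 'b) \<Rightarrow> 'b measure \<Rightarrow> 'a measure" where
  "sigX M X N = vimage_algebra (space M) X N"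

text \<open>Principal score e_u(X) = P(U = u | X), as a sigma(X)-measurable random variable.\<close>
definition pscore :: "'a measure \<Rightarrow> ('a \<Rightarrow> 'b) \<Rightarrow> 'b measure \<Rightarrow> ('a \<Rightarrow> bool \<times> bool) \<Rightarrow> bool \<times> bool \<Rightarrow> 'a \<Rightarrow> real" where
  "pscore M X N U u = real_cond_exp M (sigX M X N) (indicator {\<omega> \<in> space M. U \<omega> = u})"

definition pcond_mean :: "'a measure \<Rightarrow> ('a \<Rightarrow> 'b) \<Rightarrow> 'b measure \<Rightarrow> ('a \<Rightarrow> bool \<times> bool) \<Rightarrow> bool \<times> bool \<Rightarrow> ('a \<Rightarrow> real) \<Rightarrow> 'a \<Rightarrow> real" where
  "pcond_mean M X N U u f = (\<lambda>\<omega>.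
     real_cond_exp M (sigX M X N) (\<lambda>\<omega>'. indicator {\<omega>'' \<in> space M. U \<omega>'' = u} \<omega>' * f \<omega>') \<omega>
       / pscore M X N U u \<omega>)"

definition pprop :: "'a measure \<Rightarrow> ('a \<Rightarrow> bool \<times> bool) \<Rightarrow> bool \<times> bool \<Rightarrow> real" where
  "pprop M U u = measure M {\<omega> \<in> space M. U \<omega> = u}"

definition ACE :: "'a measure \<Rightarrow> ('a \<Rightarrow> bool \<times> bool) \<Rightarrow> bool \<times> bool \<Rightarrow> ('a \<Rightarrow> real) \<Rightarrow> ('a \<Rightarrow> real) \<Rightarrow> real" where
  "ACE M U u Y1 Y0 = cond_mean_ev M (\<lambda>\<omega>. Y1 \<omega> - Y0 \<omega>) {\<omega> \<in> space M. U \<omega> = u}"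

end

theory Submission
  imports Defs
begin


lemma indep_var_from_sets:
  assumes M: "prob_space M"
    and ind: "prob_space.indep_set M (sets A) (sets B)"
    and sA: "space A = space M" and sB: "space B = space M"
    and f: "f \<in> borel_measurable A" and g: "g \<in> borel_measurable B"
    and fM: "f \<in> borel_measurable M" and gM: "g \<in> borel_measurable M"
  shows "prob_space.indep_var M borel f borel (g :: _ \<Rightarrow> real)"
proof -
  interpret prob_space M by fact
  have fs: "{f -` S \<inter> space M |S. S \<in> sets borel} \<subseteq> sets A"
    using f sA by (auto simp: measurable_def)
  have gs: "{g -` S \<inter> space M |S. S \<in> sets borel} \<subseteq> sets B"
    using g sB by (auto simp: measurable_def)
  have "indep_sets (case_bool (sets A) (sets B)) UNIV"
    using ind unfolding indep_set_def .
  then have "indep_sets (\<lambda>i. {case_bool f g i -` S \<inter> space M |S. S \<in> sets (case_bool borel borel i)}) UNIV"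
    by (rule indep_sets_mono_sets) (use fs gs in \<open>auto split: bool.split\<close>)
  then show ?thesis
    unfolding indep_var_def indep_vars_def2 using fM gM by (auto split: bool.split)
qed

lemma indep_int:
  assumes M: "prob_space M" and iv: "prob_space.indep_var M borel f borel (g :: _ \<Rightarrow> real)"
    and "integrable M f" "integrable M g"
  shows "(\<integral>\<omega>. f \<omega> * g \<omega> \<partial>M) = (\<integral>\<omega>. f \<omega> \<partial>M) * (\<integral>\<omega>. g \<omega> \<partial>M)"
  using prob_space.indep_var_lebesgue_integral[OF M iv assms(3,4)] .

lemma indep_nn:
  assumes M: "prob_space M" and iv: "prob_space.indep_var M borel f borel (g :: _ \<Rightarrow> real)"
  shows "(\<integral>\<^sup>+\<omega>. ennreal (f \<omega>) * ennreal (g \<omega>) \<partial>M) = (\<integral>\<^sup>+\<omega>. ennreal (f \<omega>) \<partial>M) * (\<integral>\<^sup>+\<omega>. ennreal (g \<omega>) \<partial>M)"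
proof -
  interpret prob_space M by fact
  have iv2: "indep_var borel (\<lambda>\<omega>. ennreal (f \<omega>)) borel (\<lambda>\<omega>. ennreal (g \<omega>))"
    using indep_var_compose[OF iv, of ennreal borel ennreal borel] by (simp add: comp_def)
  have *: "indep_vars (\<lambda>_. borel) (case_bool (\<lambda>\<omega>. ennreal (f \<omega>)) (\<lambda>\<omega>. ennreal (g \<omega>))) UNIV"
  proof -
    have **: "(\<lambda> _. borel) = case_bool borel borel"
      by (rule ext, metis (full_types) bool.simps(3) bool.simps(4))
    show ?thesis using iv2 unfolding indep_var_def ** .
  qed
  have "(\<integral>\<^sup>+\<omega>. (\<Prod>i\<in>UNIV. case_bool (\<lambda>\<omega>. ennreal (f \<omega>)) (\<lambda>\<omega>. ennreal (g \<omega>)) i \<omega>) \<partial>M)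
     = (\<Prod>i\<in>UNIV. \<integral>\<^sup>+\<omega>. case_bool (\<lambda>\<omega>. ennreal (f \<omega>)) (\<lambda>\<omega>. ennreal (g \<omega>)) i \<omega> \<partial>M)"
    by (rule indep_vars_nn_integral[OF _ *]) auto
  then show ?thesis by (simp add: UNIV_bool mult.commute)
qed

lemma aux: "(d::real) \<noteq> 0 \<Longrightarrow> p \<noteq> 0 \<Longrightarrow> x / (d * p) * (m * d) = x * m / p"
  by (simp add: field_simps)


theorem proposition3:
  fixes M :: "'a measure" and N :: "'b measure"
    and Z S1 S0 :: "'a \<Rightarrow> bool" and Y1 Y0 :: "'a \<Rightarrow> real" and X :: "'a \<Rightarrow> 'b"
    and \<epsilon> :: real
  defines "U \<equiv> stratum S1 S0"
    and "S \<equiv> obs Z S1 S0"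
    and "Y \<equiv> obs Z Y1 Y0"
    and "e10 \<equiv> pscore M X N (stratum S1 S0) (True, False)"
    and "e00 \<equiv> pscore M X N (stratum S1 S0) (False, False)"
    and "\<pi>10 \<equiv> pprop M (stratum S1 S0) (True, False)"
    and "\<pi>00 \<equiv> pprop M (stratum S1 S0) (False, False)"
  defines "w10 \<equiv> (\<lambda>\<omega>. \<epsilon> * e10 \<omega> / ((\<epsilon> * e10 \<omega> + e00 \<omega>) * \<pi>10))"
    and "w00 \<equiv> (\<lambda>\<omega>. e00 \<omega> / ((\<epsilon> * e10 \<omega> + e00 \<omega>) * \<pi>00))"
  assumes M: "prob_space M"
    and rv_Z: "Z \<in> measurable M (count_space UNIV)"
    and rv_S1: "S1 \<in> measurable M (count_space UNIV)"
    and rv_S0: "S0 \<in> measurable M (count_space UNIV)"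
    and rv_Y1: "Y1 \<in> borel_measurable M"
    and rv_Y0: "Y0 \<in> borel_measurable M"
    and rv_X: "X \<in> measurable M N"
    \<comment> \<open>Randomization\<close>
    and rand: "prob_space.indep_set M
                 (sets (vimage_algebra (space M) Z (count_space UNIV)))
                 (sets (vimage_algebra (space M) (\<lambda>\<omega>. (S1 \<omega>, S0 \<omega>, Y1 \<omega>, Y0 \<omega>, X \<omega>))
                    (count_space UNIV \<Otimes>\<^sub>M count_space UNIV \<Otimes>\<^sub>M borel \<Otimes>\<^sub>M borel \<Otimes>\<^sub>M N)))"
    \<comment> \<open>Strong monotonicity\<close>
    and mono: "AE \<omega> in M. \<not> S0 \<omega>"
    \<comment> \<open>the ratio assumption defining the constant epsilon\<close>
    and eps: "AE \<omega> in M. \<epsilon> = pcond_mean M X N U (True, False) Y0 \<omega>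
                                 / pcond_mean M X N U (False, False) Y0 \<omega>"
    \<comment> \<open>existence of expectations\<close>
    and int_Y1: "integrable M Y1" and int_Y0: "integrable M Y0"
    and int_w10: "integrable M (\<lambda>\<omega>. w10 \<omega> * Y \<omega>)"
    and int_w00: "integrable M (\<lambda>\<omega>. w00 \<omega> * Y \<omega>)"
    \<comment> \<open>positivity of conditioning events and denominators\<close>
    and pos_Z1S1: "measure M {\<omega> \<in> space M. Z \<omega> \<and> S \<omega>} > 0"
    and pos_Z1S0: "measure M {\<omega> \<in> space M. Z \<omega> \<and> \<not> S \<omega>} > 0"
    and pos_Z0: "measure M {\<omega> \<in> space M. \<not> Z \<omega>} > 0"
    and pos_pi10: "\<pi>10 > 0" and pos_pi00: "\<pi>00 > 0"
    and pos_e10: "AE \<omega> in M. e10 \<omega> > 0"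
    and pos_e00: "AE \<omega> in M. e00 \<omega> > 0"
    and pos_mu00: "AE \<omega> in M. pcond_mean M X N U (False, False) Y0 \<omega> \<noteq> 0"
    and pos_den: "AE \<omega> in M. \<epsilon> * e10 \<omega> + e00 \<omega> > 0"
  shows "(ACE M U (True, False) Y1 Y0
           = cond_mean_ev M Y {\<omega> \<in> space M. Z \<omega> \<and> S \<omega>}
             - cond_mean_ev M (\<lambda>\<omega>. w10 \<omega> * Y \<omega>) {\<omega> \<in> space M. \<not> Z \<omega>})
       \<and> (ACE M U (False, False) Y1 Y0
           = cond_mean_ev M Y {\<omega> \<in> space M. Z \<omega> \<and> \<not> S \<omega>}
             - cond_mean_ev M (\<lambda>\<omega>. w00 \<omega> * Y \<omega>) {\<omega> \<in> space M. \<not> Z \<omega>})"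
  proof -
  interpret P: prob_space M by (rule M)
  define tup where "tup = (\<lambda>\<omega>. (S1 \<omega>, S0 \<omega>, Y1 \<omega>, Y0 \<omega>, X \<omega>))"
  define PM where "PM = (count_space UNIV \<Otimes>\<^sub>M count_space UNIV \<Otimes>\<^sub>M borel \<Otimes>\<^sub>M borel \<Otimes>\<^sub>M N
      :: (bool \<times> bool \<times> real \<times> real \<times> 'b) measure)"
  define T where "T = vimage_algebra (space M) tup PM"
  define TZ where "TZ = vimage_algebra (space M) Z (count_space UNIV)"
  define F where "F = sigX M X N"
  note [measurable] = rv_Z rv_S1 rv_S0 rv_Y1 rv_Y0 rv_X
  have tupM: "tup \<in> measurable M PM" unfolding tup_def PM_def by measurable
  have tupT: "tup \<in> measurable T PM" unfolding T_def
    by (rule measurable_vimage_algebra1) (use measurable_space[OF tupM] in auto)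
  have sT: "space T = space M" unfolding T_def by simp
  have sTZ: "space TZ = space M" unfolding TZ_def by simp
  have sF: "space F = space M" unfolding F_def sigX_def by simp
  have TM: "sets T \<subseteq> sets M" unfolding T_def by (rule sets_image_in_sets[OF refl tupM])
  have TZM: "sets TZ \<subseteq> sets M" unfolding TZ_def by (rule sets_image_in_sets[OF refl rv_Z])
  have XT: "X \<in> measurable T N"
    using measurable_compose[OF tupT, of "\<lambda>t. snd (snd (snd (snd t)))" N]
    unfolding PM_def tup_def by simp
  have S1T: "S1 \<in> measurable T (count_space UNIV)"
    using measurable_compose[OF tupT, of "\<lambda>t. fst t" "count_space UNIV"]
    unfolding PM_def tup_def by simp
  have S0T: "S0 \<in> measurable T (count_space UNIV)"
    using measurable_compose[OF tupT, of "\<lambda>t. fst (snd t)" "count_space UNIV"]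
    unfolding PM_def tup_def by simp
  have Y1T: "Y1 \<in> borel_measurable T"
    using measurable_compose[OF tupT, of "\<lambda>t. fst (snd (snd t))" borel]
    unfolding PM_def tup_def by simp
  have Y0T: "Y0 \<in> borel_measurable T"
    using measurable_compose[OF tupT, of "\<lambda>t. fst (snd (snd (snd t)))" borel]
    unfolding PM_def tup_def by simp
  have FT: "sets F \<subseteq> sets T" unfolding F_def sigX_def
    by (rule sets_image_in_sets[OF sT XT])
  have subFT: "subalgebra T F" unfolding subalgebra_def using FT sF sT by simp
  have subF: "subalgebra M F" unfolding subalgebra_def using FT TM sF by auto
  interpret F: finite_measure_subalgebra M F
    by unfold_locales (rule subF)

  have subTZ: "subalgebra M TZ" unfolding subalgebra_def using TZM sTZ by auto
  have subT: "subalgebra M T" unfolding subalgebra_def using TM sT by auto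
  have rand': "P.indep_set (sets TZ) (sets T)"
    using rand unfolding TZ_def T_def tup_def PM_def .
  have indepV: "P.indep_var borel f borel g"
    if "f \<in> borel_measurable TZ" "g \<in> borel_measurable T" for f g :: "'a \<Rightarrow> real"
    by (rule indep_var_from_sets[OF M rand' sTZ sT that measurable_from_subalg[OF subTZ that(1)]
          measurable_from_subalg[OF subT that(2)]])
  define iZ where "iZ = (indicator {\<omega> \<in> space M. Z \<omega>} :: 'a \<Rightarrow> real)"
  define iN where "iN = (indicator {\<omega> \<in> space M. \<not> Z \<omega>} :: 'a \<Rightarrow> real)"
  have ZTZ: "Z \<in> measurable TZ (count_space UNIV)" unfolding TZ_def
    by (rule measurable_vimage_algebra1) auto
  have iZTZ: "iZ \<in> borel_measurable TZ" unfolding iZ_def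
  proof (rule borel_measurable_indicator)
    have "{\<omega> \<in> space M. Z \<omega>} = Z -` {True} \<inter> space TZ" using sTZ by auto
    then show "{\<omega> \<in> space M. Z \<omega>} \<in> sets TZ" using measurable_sets[OF ZTZ, of "{True}"] by simp
  qed
  have iNTZ: "iN \<in> borel_measurable TZ" unfolding iN_def
  proof (rule borel_measurable_indicator)
    have "{\<omega> \<in> space M. \<not> Z \<omega>} = Z -` {False} \<inter> space TZ" using sTZ by auto
    then show "{\<omega> \<in> space M. \<not> Z \<omega>} \<in> sets TZ" using measurable_sets[OF ZTZ, of "{False}"] by simp
  qed
  have iZint: "integral\<^sup>L M iZ = measure M {\<omega> \<in> space M. Z \<omega>}"
    unfolding iZ_def by (simp add: Int_absorb2)
  have iNint: "integral\<^sup>L M iN = measure M {\<omega> \<in> space M. \<not> Z \<omega>}"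
    unfolding iN_def by (simp add: Int_absorb2)
  have iZi: "integrable M iZ" unfolding iZ_def by (rule P.integrable_const_bound[where B=1]) (auto split: split_indicator)
  have iNi: "integrable M iN" unfolding iN_def by (rule P.integrable_const_bound[where B=1]) (auto split: split_indicator)
  have EZ: "(\<integral>\<omega>. iZ \<omega> * g \<omega> \<partial>M) = measure M {\<omega> \<in> space M. Z \<omega>} * integral\<^sup>L M g"
    if "g \<in> borel_measurable T" "integrable M g" for g
    using indep_int[OF M indepV[OF iZTZ that(1)] iZi that(2)] iZint by simp
  have EN: "(\<integral>\<omega>. iN \<omega> * g \<omega> \<partial>M) = measure M {\<omega> \<in> space M. \<not> Z \<omega>} * integral\<^sup>L M g"
    if "g \<in> borel_measurable T" "integrable M g" for g
    using indep_int[OF M indepV[OF iNTZ that(1)] iNi that(2)] iNint by simp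
  note [measurable] = S1T S0T Y1T Y0T XT
  have eF: "pscore M X N (stratum S1 S0) u \<in> borel_measurable F" for u
    unfolding pscore_def F_def by simp
  have e10T[measurable]: "e10 \<in> borel_measurable T" unfolding e10_def
    by (rule measurable_from_subalg[OF subFT eF])
  have e00T[measurable]: "e00 \<in> borel_measurable T" unfolding e00_def
    by (rule measurable_from_subalg[OF subFT eF])
  have e10F[measurable]: "e10 \<in> borel_measurable F" unfolding e10_def by (rule eF)
  have e00F[measurable]: "e00 \<in> borel_measurable F" unfolding e00_def by (rule eF)
  have w10T[measurable]: "w10 \<in> borel_measurable T" unfolding w10_def by measurable
  have w00T[measurable]: "w00 \<in> borel_measurable T" unfolding w00_def by measurable
  have w10F[measurable]: "w10 \<in> borel_measurable F" unfolding w10_def by measurable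
  have w00F[measurable]: "w00 \<in> borel_measurable F" unfolding w00_def by measurable
  have w10M[measurable]: "w10 \<in> borel_measurable M" by (rule measurable_from_subalg[OF subT w10T])
  have w00M[measurable]: "w00 \<in> borel_measurable M" by (rule measurable_from_subalg[OF subT w00T])

  define A10 where "A10 = {\<omega> \<in> space M. S1 \<omega> \<and> \<not> S0 \<omega>}"
  define A00 where "A00 = {\<omega> \<in> space M. \<not> S1 \<omega> \<and> \<not> S0 \<omega>}"
  define B1 where "B1 = {\<omega> \<in> space M. S1 \<omega>}"
  define B0 where "B0 = {\<omega> \<in> space M. \<not> S1 \<omega>}"
  have A10M[measurable]: "A10 \<in> sets M" unfolding A10_def by measurable
  have A00M[measurable]: "A00 \<in> sets M" unfolding A00_def by measurable
  have B1M[measurable]: "B1 \<in> sets M" unfolding B1_def by measurable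
  have B0M[measurable]: "B0 \<in> sets M" unfolding B0_def by measurable
  have B1T[measurable]: "B1 \<in> sets T" unfolding B1_def sT[symmetric] by measurable
  have B0T[measurable]: "B0 \<in> sets T" unfolding B0_def sT[symmetric] by measurable
  have U10: "{\<omega> \<in> space M. stratum S1 S0 \<omega> = (True, False)} = A10"
    unfolding A10_def stratum_def by auto
  have U00: "{\<omega> \<in> space M. stratum S1 S0 \<omega> = (False, False)} = A00"
    unfolding A00_def stratum_def by auto
  have pi10: "\<pi>10 = measure M A10" unfolding \<pi>10_def pprop_def U10 ..
  have pi00: "\<pi>00 = measure M A00" unfolding \<pi>00_def pprop_def U00 ..
  have pi10B: "\<pi>10 = measure M B1"
    unfolding pi10 using mono by (intro P.finite_measure_eq_AE) (auto simp: A10_def B1_def)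
  have pi00B: "\<pi>00 = measure M B0"
    unfolding pi00 using mono by (intro P.finite_measure_eq_AE) (auto simp: A00_def B0_def)
  define c10 where "c10 = real_cond_exp M F (\<lambda>\<omega>. indicator A10 \<omega> * Y0 \<omega>)"
  define c00 where "c00 = real_cond_exp M F (\<lambda>\<omega>. indicator A00 \<omega> * Y0 \<omega>)"
  have e10c: "e10 = real_cond_exp M F (indicator A10)"
    unfolding e10_def pscore_def U10 F_def ..
  have e00c: "e00 = real_cond_exp M F (indicator A00)"
    unfolding e00_def pscore_def U00 F_def ..
  have pc10: "pcond_mean M X N U (True, False) Y0 = (\<lambda>\<omega>. c10 \<omega> / e10 \<omega>)"
    unfolding pcond_mean_def U_def U10 c10_def F_def e10_def ..
  have pc00: "pcond_mean M X N U (False, False) Y0 = (\<lambda>\<omega>. c00 \<omega> / e00 \<omega>)"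
    unfolding pcond_mean_def U_def U00 c00_def F_def e00_def ..
  have i10: "integrable M (\<lambda>\<omega>. indicator A10 \<omega> * Y0 \<omega>)"
    using integrable_real_mult_indicator[OF A10M int_Y0] by (simp add: mult.commute)
  have i00: "integrable M (\<lambda>\<omega>. indicator A00 \<omega> * Y0 \<omega>)"
    using integrable_real_mult_indicator[OF A00M int_Y0] by (simp add: mult.commute)
  have Ic10: "integral\<^sup>L M c10 = (\<integral>\<omega>. indicator A10 \<omega> * Y0 \<omega> \<partial>M)"
    unfolding c10_def by (rule F.real_cond_exp_int(2)[OF i10])
  have Ic00: "integral\<^sup>L M c00 = (\<integral>\<omega>. indicator A00 \<omega> * Y0 \<omega> \<partial>M)"
    unfolding c00_def by (rule F.real_cond_exp_int(2)[OF i00])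
  have c10M[measurable]: "c10 \<in> borel_measurable M" unfolding c10_def by simp
  have c00M[measurable]: "c00 \<in> borel_measurable M" unfolding c00_def by simp
  have rY0M[measurable]: "real_cond_exp M F Y0 \<in> borel_measurable M" by simp
  have AEsplit: "AE \<omega> in M. real_cond_exp M F Y0 \<omega> = c10 \<omega> + c00 \<omega>"
  proof -
    have "AE \<omega> in M. Y0 \<omega> = indicator A10 \<omega> * Y0 \<omega> + indicator A00 \<omega> * Y0 \<omega>"
      using mono AE_space[of M] by eventually_elim (auto simp: A10_def A00_def indicator_def)
    then have "AE \<omega> in M. real_cond_exp M F Y0 \<omega>
       = real_cond_exp M F (\<lambda>\<omega>. indicator A10 \<omega> * Y0 \<omega> + indicator A00 \<omega> * Y0 \<omega>) \<omega>"
      by (rule F.real_cond_exp_cong) measurable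
    moreover have "AE \<omega> in M. real_cond_exp M F (\<lambda>\<omega>. indicator A10 \<omega> * Y0 \<omega> + indicator A00 \<omega> * Y0 \<omega>) \<omega>
       = c10 \<omega> + c00 \<omega>"
      unfolding c10_def c00_def by (rule F.real_cond_exp_add[OF i10 i00])
    ultimately show ?thesis by eventually_elim simp
  qed
  have AEw10: "AE \<omega> in M. w10 \<omega> * real_cond_exp M F Y0 \<omega> = c10 \<omega> / \<pi>10"
    using AEsplit pos_e10 pos_e00 pos_mu00 eps pos_den
  proof eventually_elim
    case (elim \<omega>)
    define m where "m = c00 \<omega> / e00 \<omega>"
    have m0: "m \<noteq> 0" using elim(4) unfolding pc00 m_def by simp
    have c00e: "c00 \<omega> = m * e00 \<omega>" using elim(3) unfolding m_def by simp
    have c10e: "c10 \<omega> = \<epsilon> * m * e10 \<omega>"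
      using elim(5) elim(2) m0 unfolding pc10 pc00 m_def[symmetric] by (simp add: field_simps)
    have "w10 \<omega> * real_cond_exp M F Y0 \<omega> = \<epsilon> * e10 \<omega> / ((\<epsilon> * e10 \<omega> + e00 \<omega>) * \<pi>10) * (m * (\<epsilon> * e10 \<omega> + e00 \<omega>))"
      unfolding w10_def elim(1) c00e c10e by (simp add: algebra_simps)
    also have "\<dots> = \<epsilon> * e10 \<omega> * m / \<pi>10" using elim(6) pos_pi10 by (intro aux) auto
    also have "\<dots> = \<epsilon> * m * e10 \<omega> / \<pi>10" by simp
    finally show ?case unfolding c10e .
  qed
  have AEw00: "AE \<omega> in M. w00 \<omega> * real_cond_exp M F Y0 \<omega> = c00 \<omega> / \<pi>00"
    using AEsplit pos_e10 pos_e00 pos_mu00 eps pos_den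
  proof eventually_elim
    case (elim \<omega>)
    define m where "m = c00 \<omega> / e00 \<omega>"
    have m0: "m \<noteq> 0" using elim(4) unfolding pc00 m_def by simp
    have c00e: "c00 \<omega> = m * e00 \<omega>" using elim(3) unfolding m_def by simp
    have c10e: "c10 \<omega> = \<epsilon> * m * e10 \<omega>"
      using elim(5) elim(2) m0 unfolding pc10 pc00 m_def[symmetric] by (simp add: field_simps)
    have "w00 \<omega> * real_cond_exp M F Y0 \<omega> = e00 \<omega> / ((\<epsilon> * e10 \<omega> + e00 \<omega>) * \<pi>00) * (m * (\<epsilon> * e10 \<omega> + e00 \<omega>))"
      unfolding w00_def elim(1) c00e c10e by (simp add: algebra_simps)
    also have "\<dots> = e00 \<omega> * m / \<pi>00" using elim(6) pos_pi00 by (intro aux) auto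
    also have "\<dots> = m * e00 \<omega> / \<pi>00" by simp
    finally show ?case unfolding c00e .
  qed

  have PN: "measure M {\<omega> \<in> space M. \<not> Z \<omega>} > 0" by (rule pos_Z0)
  have wint: "integrable M (\<lambda>\<omega>. w \<omega> * Y0 \<omega>)"
    if wT[measurable]: "w \<in> borel_measurable T" and wi: "integrable M (\<lambda>\<omega>. w \<omega> * Y \<omega>)" for w
  proof -
    have wM[measurable]: "w \<in> borel_measurable M" by (rule measurable_from_subalg[OF subT wT])
    have hT: "(\<lambda>\<omega>. \<bar>w \<omega> * Y0 \<omega>\<bar>) \<in> borel_measurable T" by measurable
    have i1: "integrable M (\<lambda>\<omega>. iN \<omega> * (w \<omega> * Y0 \<omega>))"
    proof -
      have "integrable M (\<lambda>\<omega>. w \<omega> * Y \<omega> * indicator {\<omega> \<in> space M. \<not> Z \<omega>} \<omega>)"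
        by (rule integrable_real_mult_indicator[OF _ wi]) measurable
      moreover have "(\<lambda>\<omega>. w \<omega> * Y \<omega> * indicator {\<omega> \<in> space M. \<not> Z \<omega>} \<omega>) = (\<lambda>\<omega>. iN \<omega> * (w \<omega> * Y0 \<omega>))"
        by (auto simp: iN_def Y_def obs_def indicator_def)
      ultimately show ?thesis by simp
    qed
    have "(\<integral>\<^sup>+\<omega>. ennreal (iN \<omega>) * ennreal \<bar>w \<omega> * Y0 \<omega>\<bar> \<partial>M)
        = (\<integral>\<^sup>+\<omega>. ennreal (iN \<omega>) \<partial>M) * (\<integral>\<^sup>+\<omega>. ennreal \<bar>w \<omega> * Y0 \<omega>\<bar> \<partial>M)"
      by (rule indep_nn[OF M indepV[OF iNTZ hT]])
    moreover have "(\<integral>\<^sup>+\<omega>. ennreal (iN \<omega>) * ennreal \<bar>w \<omega> * Y0 \<omega>\<bar> \<partial>M)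
        = (\<integral>\<^sup>+\<omega>. ennreal (norm (iN \<omega> * (w \<omega> * Y0 \<omega>))) \<partial>M)"
      by (rule nn_integral_cong) (simp add: iN_def indicator_def)
    moreover have "(\<integral>\<^sup>+\<omega>. ennreal (norm (iN \<omega> * (w \<omega> * Y0 \<omega>))) \<partial>M) < \<infinity>"
      using i1 by (simp add: integrable_iff_bounded)
    moreover have "(\<integral>\<^sup>+\<omega>. ennreal (iN \<omega>) \<partial>M) = ennreal (measure M {\<omega> \<in> space M. \<not> Z \<omega>})"
    proof -
      have "(\<integral>\<^sup>+\<omega>. ennreal (iN \<omega>) \<partial>M) = (\<integral>\<^sup>+\<omega>. indicator {\<omega> \<in> space M. \<not> Z \<omega>} \<omega> \<partial>M)"
        by (rule nn_integral_cong) (simp add: iN_def indicator_def)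
      also have "\<dots> = emeasure M {\<omega> \<in> space M. \<not> Z \<omega>}"
        by (rule nn_integral_indicator) measurable
      finally show ?thesis by (simp add: P.emeasure_eq_measure)
    qed
    ultimately have "ennreal (measure M {\<omega> \<in> space M. \<not> Z \<omega>}) * (\<integral>\<^sup>+\<omega>. ennreal \<bar>w \<omega> * Y0 \<omega>\<bar> \<partial>M) < \<infinity>"
      by simp
    then have "(\<integral>\<^sup>+\<omega>. ennreal \<bar>w \<omega> * Y0 \<omega>\<bar> \<partial>M) < \<infinity>"
      using PN by (auto simp: ennreal_mult_less_top top_unique)
    then show ?thesis by (intro integrableI_bounded) auto
  qed
  have i10w: "integrable M (\<lambda>\<omega>. w10 \<omega> * Y0 \<omega>)" by (rule wint[OF w10T int_w10])
  have i00w: "integrable M (\<lambda>\<omega>. w00 \<omega> * Y0 \<omega>)" by (rule wint[OF w00T int_w00])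
  have Q: "cond_mean_ev M (\<lambda>\<omega>. w \<omega> * Y \<omega>) {\<omega> \<in> space M. \<not> Z \<omega>} = (\<integral>\<omega>. w \<omega> * Y0 \<omega> \<partial>M)"
    if wT[measurable]: "w \<in> borel_measurable T" and wi: "integrable M (\<lambda>\<omega>. w \<omega> * Y0 \<omega>)" for w
  proof -
    have "(\<integral>\<omega>. indicator {\<omega> \<in> space M. \<not> Z \<omega>} \<omega> * (w \<omega> * Y \<omega>) \<partial>M) = (\<integral>\<omega>. iN \<omega> * (w \<omega> * Y0 \<omega>) \<partial>M)"
      by (rule Bochner_Integration.integral_cong) (auto simp: iN_def Y_def obs_def indicator_def)
    also have "\<dots> = measure M {\<omega> \<in> space M. \<not> Z \<omega>} * (\<integral>\<omega>. w \<omega> * Y0 \<omega> \<partial>M)"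
      by (rule EN[OF _ wi]) measurable
    finally show ?thesis unfolding cond_mean_ev_def using PN by simp
  qed
  have R10: "(\<integral>\<omega>. w10 \<omega> * Y0 \<omega> \<partial>M) = (\<integral>\<omega>. indicator A10 \<omega> * Y0 \<omega> \<partial>M) / \<pi>10"
  proof -
    have "(\<integral>\<omega>. w10 \<omega> * Y0 \<omega> \<partial>M) = (\<integral>\<omega>. w10 \<omega> * real_cond_exp M F Y0 \<omega> \<partial>M)"
      by (rule F.real_cond_exp_intg(2)[OF i10w w10F rv_Y0, symmetric])
    also have "\<dots> = (\<integral>\<omega>. c10 \<omega> / \<pi>10 \<partial>M)"
      by (rule integral_cong_AE) (use AEw10 in auto)
    finally show ?thesis using Ic10 by simp
  qed
  have R00: "(\<integral>\<omega>. w00 \<omega> * Y0 \<omega> \<partial>M) = (\<integral>\<omega>. indicator A00 \<omega> * Y0 \<omega> \<partial>M) / \<pi>00"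
  proof -
    have "(\<integral>\<omega>. w00 \<omega> * Y0 \<omega> \<partial>M) = (\<integral>\<omega>. w00 \<omega> * real_cond_exp M F Y0 \<omega> \<partial>M)"
      by (rule F.real_cond_exp_intg(2)[OF i00w w00F rv_Y0, symmetric])
    also have "\<dots> = (\<integral>\<omega>. c00 \<omega> / \<pi>00 \<partial>M)"
      by (rule integral_cong_AE) (use AEw00 in auto)
    finally show ?thesis using Ic00 by simp
  qed

  have iB1T: "indicator B1 \<in> borel_measurable T" by measurable
  have iB0T: "indicator B0 \<in> borel_measurable T" by measurable
  have iB1i: "integrable M (indicator B1 :: 'a \<Rightarrow> real)"
    by (rule P.integrable_const_bound[where B=1]) (auto split: split_indicator)
  have iB0i: "integrable M (indicator B0 :: 'a \<Rightarrow> real)"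
    by (rule P.integrable_const_bound[where B=1]) (auto split: split_indicator)
  have iB1Y: "integrable M (\<lambda>\<omega>. indicator B1 \<omega> * Y1 \<omega>)"
    using integrable_real_mult_indicator[OF B1M int_Y1] by (simp add: mult.commute)
  have iB0Y: "integrable M (\<lambda>\<omega>. indicator B0 \<omega> * Y1 \<omega>)"
    using integrable_real_mult_indicator[OF B0M int_Y1] by (simp add: mult.commute)
  have ZS1: "cond_mean_ev M Y {\<omega> \<in> space M. Z \<omega> \<and> S \<omega>} = (\<integral>\<omega>. indicator A10 \<omega> * Y1 \<omega> \<partial>M) / \<pi>10"
  proof -
    have num: "(\<integral>\<omega>. indicator {\<omega> \<in> space M. Z \<omega> \<and> S \<omega>} \<omega> * Y \<omega> \<partial>M)
        = measure M {\<omega> \<in> space M. Z \<omega>} * (\<integral>\<omega>. indicator B1 \<omega> * Y1 \<omega> \<partial>M)"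
    proof -
      have "(\<integral>\<omega>. indicator {\<omega> \<in> space M. Z \<omega> \<and> S \<omega>} \<omega> * Y \<omega> \<partial>M) = (\<integral>\<omega>. iZ \<omega> * (indicator B1 \<omega> * Y1 \<omega>) \<partial>M)"
        by (rule Bochner_Integration.integral_cong) (auto simp: iZ_def B1_def S_def Y_def obs_def indicator_def)
      also have "\<dots> = measure M {\<omega> \<in> space M. Z \<omega>} * (\<integral>\<omega>. indicator B1 \<omega> * Y1 \<omega> \<partial>M)"
        by (rule EZ[OF _ iB1Y]) measurable
      finally show ?thesis .
    qed
    have den: "measure M {\<omega> \<in> space M. Z \<omega> \<and> S \<omega>} = measure M {\<omega> \<in> space M. Z \<omega>} * \<pi>10"
    proof -
      have "measure M {\<omega> \<in> space M. Z \<omega> \<and> S \<omega>} = (\<integral>\<omega>. indicator {\<omega> \<in> space M. Z \<omega> \<and> S \<omega>} \<omega> \<partial>M)"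
        by (simp add: Int_absorb2)
      also have "\<dots> = (\<integral>\<omega>. iZ \<omega> * indicator B1 \<omega> \<partial>M)"
        by (rule Bochner_Integration.integral_cong) (auto simp: iZ_def B1_def S_def obs_def indicator_def)
      also have "\<dots> = measure M {\<omega> \<in> space M. Z \<omega>} * integral\<^sup>L M (indicator B1)"
        by (rule EZ[OF iB1T iB1i])
      finally show ?thesis unfolding pi10B by (simp add: Int_absorb2)
    qed
    have AEY: "(\<integral>\<omega>. indicator B1 \<omega> * Y1 \<omega> \<partial>M) = (\<integral>\<omega>. indicator A10 \<omega> * Y1 \<omega> \<partial>M)"
      by (rule integral_cong_AE) (use mono in \<open>auto simp: A10_def B1_def indicator_def\<close>)
    have "measure M {\<omega> \<in> space M. Z \<omega>} \<noteq> 0" using den pos_Z1S1 by auto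
    then show ?thesis unfolding cond_mean_ev_def num den AEY by simp
  qed
  have ZS0: "cond_mean_ev M Y {\<omega> \<in> space M. Z \<omega> \<and> \<not> S \<omega>} = (\<integral>\<omega>. indicator A00 \<omega> * Y1 \<omega> \<partial>M) / \<pi>00"
  proof -
    have num: "(\<integral>\<omega>. indicator {\<omega> \<in> space M. Z \<omega> \<and> \<not> S \<omega>} \<omega> * Y \<omega> \<partial>M)
        = measure M {\<omega> \<in> space M. Z \<omega>} * (\<integral>\<omega>. indicator B0 \<omega> * Y1 \<omega> \<partial>M)"
    proof -
      have "(\<integral>\<omega>. indicator {\<omega> \<in> space M. Z \<omega> \<and> \<not> S \<omega>} \<omega> * Y \<omega> \<partial>M) = (\<integral>\<omega>. iZ \<omega> * (indicator B0 \<omega> * Y1 \<omega>) \<partial>M)"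
        by (rule Bochner_Integration.integral_cong) (auto simp: iZ_def B0_def S_def Y_def obs_def indicator_def)
      also have "\<dots> = measure M {\<omega> \<in> space M. Z \<omega>} * (\<integral>\<omega>. indicator B0 \<omega> * Y1 \<omega> \<partial>M)"
        by (rule EZ[OF _ iB0Y]) measurable
      finally show ?thesis .
    qed
    have den: "measure M {\<omega> \<in> space M. Z \<omega> \<and> \<not> S \<omega>} = measure M {\<omega> \<in> space M. Z \<omega>} * \<pi>00"
    proof -
      have "measure M {\<omega> \<in> space M. Z \<omega> \<and> \<not> S \<omega>} = (\<integral>\<omega>. indicator {\<omega> \<in> space M. Z \<omega> \<and> \<not> S \<omega>} \<omega> \<partial>M)"
        by (simp add: Int_absorb2)
      also have "\<dots> = (\<integral>\<omega>. iZ \<omega> * indicator B0 \<omega> \<partial>M)"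
        by (rule Bochner_Integration.integral_cong) (auto simp: iZ_def B0_def S_def obs_def indicator_def)
      also have "\<dots> = measure M {\<omega> \<in> space M. Z \<omega>} * integral\<^sup>L M (indicator B0)"
        by (rule EZ[OF iB0T iB0i])
      finally show ?thesis unfolding pi00B by (simp add: Int_absorb2)
    qed
    have AEY: "(\<integral>\<omega>. indicator B0 \<omega> * Y1 \<omega> \<partial>M) = (\<integral>\<omega>. indicator A00 \<omega> * Y1 \<omega> \<partial>M)"
      by (rule integral_cong_AE) (use mono in \<open>auto simp: A00_def B0_def indicator_def\<close>)
    have "measure M {\<omega> \<in> space M. Z \<omega>} \<noteq> 0" using den pos_Z1S0 by auto
    then show ?thesis unfolding cond_mean_ev_def num den AEY by simp
  qed
  have j10: "integrable M (\<lambda>\<omega>. indicator A10 \<omega> * Y1 \<omega>)"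
    using integrable_real_mult_indicator[OF A10M int_Y1] by (simp add: mult.commute)
  have j00: "integrable M (\<lambda>\<omega>. indicator A00 \<omega> * Y1 \<omega>)"
    using integrable_real_mult_indicator[OF A00M int_Y1] by (simp add: mult.commute)
  have ACE10: "ACE M U (True, False) Y1 Y0
      = (\<integral>\<omega>. indicator A10 \<omega> * Y1 \<omega> \<partial>M) / \<pi>10 - (\<integral>\<omega>. indicator A10 \<omega> * Y0 \<omega> \<partial>M) / \<pi>10"
  proof -
    have "(\<integral>\<omega>. indicator A10 \<omega> * (Y1 \<omega> - Y0 \<omega>) \<partial>M)
       = (\<integral>\<omega>. indicator A10 \<omega> * Y1 \<omega> - indicator A10 \<omega> * Y0 \<omega> \<partial>M)"
      by (simp add: algebra_simps)
    also have "\<dots> = (\<integral>\<omega>. indicator A10 \<omega> * Y1 \<omega> \<partial>M) - (\<integral>\<omega>. indicator A10 \<omega> * Y0 \<omega> \<partial>M)"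
      by (rule Bochner_Integration.integral_diff[OF j10 i10])
    finally show ?thesis unfolding ACE_def cond_mean_ev_def U_def U10 pi10[symmetric]
      by (simp add: diff_divide_distrib)
  qed
  have ACE00: "ACE M U (False, False) Y1 Y0
      = (\<integral>\<omega>. indicator A00 \<omega> * Y1 \<omega> \<partial>M) / \<pi>00 - (\<integral>\<omega>. indicator A00 \<omega> * Y0 \<omega> \<partial>M) / \<pi>00"
  proof -
    have "(\<integral>\<omega>. indicator A00 \<omega> * (Y1 \<omega> - Y0 \<omega>) \<partial>M)
       = (\<integral>\<omega>. indicator A00 \<omega> * Y1 \<omega> - indicator A00 \<omega> * Y0 \<omega> \<partial>M)"
      by (simp add: algebra_simps)
    also have "\<dots> = (\<integral>\<omega>. indicator A00 \<omega> * Y1 \<omega> \<partial>M) - (\<integral>\<omega>. indicator A00 \<omega> * Y0 \<omega> \<partial>M)"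
      by (rule Bochner_Integration.integral_diff[OF j00 i00])
    finally show ?thesis unfolding ACE_def cond_mean_ev_def U_def U00 pi00[symmetric]
      by (simp add: diff_divide_distrib)
  qed
  show ?thesis
    unfolding ACE10 ACE00 ZS1 ZS0 Q[OF w10T i10w] Q[OF w00T i00w] R10 R00 by simp

qed

end
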